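(* Let $(V,E,\mu)$ be an infinite, connected, locally finite weighted graph, $o\in V$, and $p>0$. If $$\sum_{n=1}^\infty n\Big(\sum_{k=n}^\infty\frac{k}{\mu(B_k)}\Big)^p=\infty,$$ then $$\sum_{n=1}^\infty n\Big(\sum_{k=n}^\infty\frac1{b_k}\Big)^p=\infty.$$
   Context: Weighted graph: $\mu_{xy}=\mu_{yx}\ge0$, $\mu_{xy}>0$ iff $x\sim y$, $\mu(x)=\sum_{y\sim x}\mu_{xy}$, $\mu(A)=\sum_{x\in A}\mu(x)$. $d$ is graph distance, $B_k=\{x:d(o,x)\le k\}$, and $b_k=\sum_{x\in B_k,\,y\notin B_k,\,x\sim y}\mu_{xy}>0$. *)

theory Defs
  imports Complex_Main
begin

definition weighted_graph :: "('a \<Rightarrow> 'a \<Rightarrow> real) \<Rightarrow> bool" where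
  "weighted_graph mu \<longleftrightarrow> (\<forall>x y. mu x y = mu y x \<and> 0 \<le> mu x y)"

definition adj :: "('a \<Rightarrow> 'a \<Rightarrow> real) \<Rightarrow> 'a \<Rightarrow> 'a \<Rightarrow> bool" where
  "adj mu x y \<longleftrightarrow> 0 < mu x y"

definition locally_finite_graph :: "('a \<Rightarrow> 'a \<Rightarrow> real) \<Rightarrow> bool" where
  "locally_finite_graph mu \<longleftrightarrow> (\<forall>x. finite {y. adj mu x y})"

definition connected_graph :: "('a \<Rightarrow> 'a \<Rightarrow> real) \<Rightarrow> bool" where
  "connected_graph mu \<longleftrightarrow> (\<forall>x y. \<exists>n. (adj mu ^^ n) x y)"

definition vmeasure :: "('a \<Rightarrow> 'a \<Rightarrow> real) \<Rightarrow> 'a \<Rightarrow> real" where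
  "vmeasure mu x = (\<Sum>y\<in>{y. adj mu x y}. mu x y)"

definition smeasure :: "('a \<Rightarrow> 'a \<Rightarrow> real) \<Rightarrow> 'a set \<Rightarrow> real" where
  "smeasure mu A = (\<Sum>x\<in>A. vmeasure mu x)"

definition gdist :: "('a \<Rightarrow> 'a \<Rightarrow> real) \<Rightarrow> 'a \<Rightarrow> 'a \<Rightarrow> nat" where
  "gdist mu x y = (LEAST n. (adj mu ^^ n) x y)"

definition gball :: "('a \<Rightarrow> 'a \<Rightarrow> real) \<Rightarrow> 'a \<Rightarrow> nat \<Rightarrow> 'a set" where
  "gball mu v0 k = {x. gdist mu v0 x \<le> k}"

definition bdry :: "('a \<Rightarrow> 'a \<Rightarrow> real) \<Rightarrow> 'a \<Rightarrow> nat \<Rightarrow> real" where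
  "bdry mu v0 k = (\<Sum>(x,y)\<in>{(x,y). x \<in> gball mu v0 k \<and> y \<notin> gball mu v0 k \<and> adj mu x y}. mu x y)"

end

theory Submission
  imports Defs "HOL-Analysis.Analysis"
begin

lemma hm_am:
  fixes b :: "nat \<Rightarrow> real"
  assumes "finite J" "\<And>j. j \<in> J \<Longrightarrow> b j > 0"
  shows "(real (card J))\<^sup>2 \<le> (\<Sum>j\<in>J. b j) * (\<Sum>j\<in>J. 1 / b j)"
proof -
  have "(\<Sum>j\<in>J. sqrt (b j) * (1 / sqrt (b j)))\<^sup>2
        \<le> (\<Sum>j\<in>J. (sqrt (b j))\<^sup>2) * (\<Sum>j\<in>J. (1 / sqrt (b j))\<^sup>2)"
    by (rule Cauchy_Schwarz_ineq_sum)
  moreover have "(\<Sum>j\<in>J. sqrt (b j) * (1 / sqrt (b j))) = (\<Sum>j\<in>J. (1::real))"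
  proof (rule sum.cong[OF refl])
    fix j assume "j \<in> J"
    then have "sqrt (b j) > 0" using assms(2) by simp
    then show "sqrt (b j) * (1 / sqrt (b j)) = 1" by simp
  qed
  moreover have "(\<Sum>j\<in>J. (1::real)) = real (card J)" by simp
  moreover have "(\<Sum>j\<in>J. (sqrt (b j))\<^sup>2) = (\<Sum>j\<in>J. b j)"
    using assms by (intro sum.cong) (auto simp: less_imp_le)
  moreover have "(\<Sum>j\<in>J. (1 / sqrt (b j))\<^sup>2) = (\<Sum>j\<in>J. 1 / b j)"
    using assms by (intro sum.cong) (auto simp: less_imp_le power_divide)
  ultimately show ?thesis by simp
qed

context
  fixes mu :: "'a \<Rightarrow> 'a \<Rightarrow> real" and v0 :: 'a
  assumes wg: "weighted_graph mu" and conn: "connected_graph mu"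
    and lf: "locally_finite_graph mu"
begin

lemma path_d: "(adj mu ^^ gdist mu v0 x) v0 x"
  using conn unfolding connected_graph_def gdist_def by (meson LeastI_ex)

lemma d_le: "(adj mu ^^ n) v0 x \<Longrightarrow> gdist mu v0 x \<le> n"
  unfolding gdist_def by (rule Least_le)

lemma d_adj: "adj mu x y \<Longrightarrow> gdist mu v0 y \<le> gdist mu v0 x + 1"
  using path_d[of x] relpowp_Suc_I d_le by fastforce

lemma d_pred:
  assumes h: "gdist mu v0 y = Suc m"
  shows "\<exists>x. gdist mu v0 x = m \<and> adj mu x y"
proof -
  from path_d[of y] h have "(adj mu ^^ Suc m) v0 y" by simp
  then obtain x where x: "(adj mu ^^ m) v0 x" "adj mu x y" by (rule relpowp_Suc_E)
  then have "gdist mu v0 x \<le> m" using d_le by auto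
  moreover have "Suc m \<le> gdist mu v0 x + 1" using d_adj[OF x(2)] h by simp
  ultimately show ?thesis using x(2) by (intro exI[of _ x]) auto
qed

lemma d0: "gdist mu v0 x = 0 \<Longrightarrow> x = v0"
  using path_d[of x] by simp

lemma finite_ball: "finite (gball mu v0 k)"
proof (induction k)
  case 0
  have "gball mu v0 0 \<subseteq> {v0}" using d0 by (auto simp: gball_def)
  then show ?case using finite_subset by blast
next
  case (Suc k)
  have "gball mu v0 (Suc k) \<subseteq> gball mu v0 k \<union> (\<Union>x\<in>gball mu v0 k. {y. adj mu x y})"
  proof
    fix y assume "y \<in> gball mu v0 (Suc k)"
    then have "gdist mu v0 y \<le> Suc k" by (simp add: gball_def)
    then consider "gdist mu v0 y \<le> k" | "gdist mu v0 y = Suc k" by linarith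
    then show "y \<in> gball mu v0 k \<union> (\<Union>x\<in>gball mu v0 k. {y. adj mu x y})"
    proof cases
      case 1 then show ?thesis by (simp add: gball_def)
    next
      case 2
      then obtain x where "gdist mu v0 x = k" "adj mu x y" using d_pred by blast
      then show ?thesis by (auto simp: gball_def)
    qed
  qed
  moreover have "finite (gball mu v0 k \<union> (\<Union>x\<in>gball mu v0 k. {y. adj mu x y}))"
    using Suc lf by (auto simp: locally_finite_graph_def)
  ultimately show ?case using finite_subset by blast
qed

lemma finite_Sig: "finite (Sigma (gball mu v0 k) (\<lambda>x. {y. adj mu x y}))"
  using finite_ball lf by (auto simp: locally_finite_graph_def)

lemma smeasure_Sig:
  "smeasure mu (gball mu v0 k) = (\<Sum>(x,y)\<in>Sigma (gball mu v0 k) (\<lambda>x. {y. adj mu x y}). mu x y)"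
  unfolding smeasure_def vmeasure_def
  using finite_ball lf by (subst sum.Sigma) (auto simp: locally_finite_graph_def)

definition Pj :: "nat \<Rightarrow> ('a \<times> 'a) set" where
  "Pj j = {(x,y). x \<in> gball mu v0 j \<and> y \<notin> gball mu v0 j \<and> adj mu x y}"

lemma Pj_sub: "j \<le> k \<Longrightarrow> Pj j \<subseteq> Sigma (gball mu v0 k) (\<lambda>x. {y. adj mu x y})"
  by (auto simp: Pj_def gball_def)

lemma Pj_disj: "i \<noteq> j \<Longrightarrow> Pj i \<inter> Pj j = {}"
proof -
  have "False" if "i < j" "(x,y) \<in> Pj i" "(x,y) \<in> Pj j" for i j x y
    using that d_adj[of x y] by (auto simp: Pj_def gball_def)
  then show "i \<noteq> j \<Longrightarrow> Pj i \<inter> Pj j = {}"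
    by (metis disjoint_iff linorder_neqE_nat surj_pair)
qed

lemma bdry_Pj: "bdry mu v0 j = (\<Sum>(x,y)\<in>Pj j. mu x y)"
  unfolding bdry_def Pj_def ..

lemma finite_Pj: "finite (Pj j)"
  using Pj_sub[of j j] finite_Sig[of j] finite_subset by blast

lemma meas_ge:
  assumes "J \<subseteq> {..k}"
  shows "(\<Sum>j\<in>J. bdry mu v0 j) \<le> smeasure mu (gball mu v0 k)"
proof -
  have fJ: "finite J" using assms finite_subset by blast
  have "(\<Sum>j\<in>J. bdry mu v0 j) = (\<Sum>j\<in>J. (\<Sum>(x,y)\<in>Pj j. mu x y))"
    by (simp add: bdry_Pj)
  also have "\<dots> = (\<Sum>(x,y)\<in>(\<Union>j\<in>J. Pj j). mu x y)"
    using fJ finite_Pj Pj_disj by (subst sum.UNION_disjoint) auto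
  also have "\<dots> \<le> (\<Sum>(x,y)\<in>Sigma (gball mu v0 k) (\<lambda>x. {y. adj mu x y}). mu x y)"
    using finite_Sig Pj_sub assms wg
    by (intro sum_mono2) (auto simp: weighted_graph_def)
  finally show ?thesis by (simp add: smeasure_Sig)
qed

lemma b_pos:
  assumes inf: "infinite (UNIV :: 'a set)"
  shows "0 < bdry mu v0 j"
proof -
  have "\<exists>y. y \<notin> gball mu v0 j"
    using inf finite_ball[of j] by (metis UNIV_I finite_subset subsetI)
  then obtain y where y: "y \<notin> gball mu v0 j"
    and ymin: "\<And>z. z \<notin> gball mu v0 j \<Longrightarrow> gdist mu v0 y \<le> gdist mu v0 z"
    using ex_has_least_nat[of "\<lambda>y. y \<notin> gball mu v0 j" _ "gdist mu v0"] by blast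
  then have jy: "gdist mu v0 y > j" by (simp add: gball_def)
  obtain m where "gdist mu v0 y = Suc m"
  proof (cases "gdist mu v0 y")
    case 0 then show ?thesis using jy by simp
  next
    case (Suc m') then show ?thesis using that by simp
  qed
  then obtain x where x: "gdist mu v0 x = m" "adj mu x y" using d_pred by blast
  have "x \<in> gball mu v0 j"
    using ymin[of x] x \<open>gdist mu v0 y = Suc m\<close> by fastforce
  then have xy: "(x,y) \<in> Pj j" using y x by (simp add: Pj_def)
  have "0 < mu x y" using x(2) by (simp add: adj_def)
  also have "mu x y \<le> (\<Sum>(x,y)\<in>Pj j. mu x y)"
    using member_le_sum[OF xy, of "\<lambda>(x,y). mu x y"] finite_Pj wg
    by (auto simp: weighted_graph_def)
  finally show ?thesis by (simp add: bdry_Pj)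
qed

lemma smeasure_nonneg: "0 \<le> smeasure mu A"
  unfolding smeasure_def vmeasure_def
  by (intro sum_nonneg) (auto simp: adj_def less_imp_le)

lemma key:
  assumes inf: "infinite (UNIV :: 'a set)" and k1: "1 \<le> k"
  shows "real k / smeasure mu (gball mu v0 k)
         \<le> 4 / real k * (\<Sum>j\<in>{k div 2 + 1..k}. 1 / bdry mu v0 j)"
proof -
  define J where "J = {k div 2 + 1..k}"
  define S where "S = (\<Sum>j\<in>J. bdry mu v0 j)"
  define C where "C = (\<Sum>j\<in>J. 1 / bdry mu v0 j)"
  have cardJ: "card J = k - k div 2" by (simp add: J_def)
  have kn: "real k \<le> 2 * real (card J)" unfolding cardJ by linarith
  have Jne: "J \<noteq> {}" using k1 by (auto simp: J_def)
  have S0: "0 < S" unfolding S_def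
    using b_pos[OF inf] Jne by (intro sum_pos) (auto simp: J_def)
  have hm: "(real (card J))\<^sup>2 \<le> S * C"
    unfolding S_def C_def by (rule hm_am) (auto simp: J_def b_pos[OF inf])
  have mS: "S \<le> smeasure mu (gball mu v0 k)"
    unfolding S_def by (rule meas_ge) (auto simp: J_def)
  have k0: "0 < real k" using k1 by simp
  have "real k / smeasure mu (gball mu v0 k) \<le> real k / S"
    using mS S0 k0 by (intro divide_left_mono) auto
  also have "\<dots> \<le> 4 * C / real k"
  proof -
    have "real k * real k \<le> (2 * real (card J)) * (2 * real (card J))"
      using kn k0 by (intro mult_mono) auto
    also have "\<dots> = 4 * (real (card J))\<^sup>2" by (simp add: power2_eq_square)
    also have "\<dots> \<le> 4 * (S * C)" using hm by simp
    finally have "real k * real k \<le> 4 * C * S" by (simp add: mult_ac)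
    then show ?thesis using S0 k0 by (simp add: field_simps)
  qed
  finally show ?thesis by (simp add: C_def J_def)
qed

end

lemma summable_half:
  fixes g :: "nat \<Rightarrow> real"
  assumes g0: "\<And>n. 0 \<le> g n" and sg: "summable g"
  shows "summable (\<lambda>n. g (n div 2))"
proof -
  have eq: "(\<Sum>n<2*M. g (n div 2)) = 2 * (\<Sum>m<M. g m)" for M
    by (induction M) auto
  have "(\<Sum>n<M. g (n div 2)) \<le> 2 * suminf g" for M
  proof -
    have "(\<Sum>n<M. g (n div 2)) \<le> (\<Sum>n<2*M. g (n div 2))"
      using g0 by (intro sum_mono2) auto
    also have "\<dots> = 2 * (\<Sum>m<M. g m)" by (rule eq)
    also have "\<dots> \<le> 2 * suminf g"
      using sum_le_suminf[OF sg, of "{..<M}"] g0 by auto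
    finally show ?thesis .
  qed
  then show ?thesis using g0 by (intro summableI_nonneg_bounded) auto
qed

lemma analysis:
  fixes a c :: "nat \<Rightarrow> real" and p :: real
  assumes a0: "\<And>k. 0 \<le> a k" and c0: "\<And>j. 0 \<le> c j"
    and key: "\<And>k. 1 \<le> k \<Longrightarrow> a k \<le> 4 / real k * (\<Sum>j\<in>{k div 2 + 1..k}. c j)"
    and sc: "summable (\<lambda>k. c (k+1))"
    and sT: "summable (\<lambda>n. real (n+1) * (\<Sum>i. c (i+n+1)) powr p)"
    and p: "0 < p"
  shows "summable (\<lambda>k. a (k+1)) \<and> summable (\<lambda>n. real (n+1) * (\<Sum>i. a (i+n+1)) powr p)"
proof -
  define T where "T m = (\<Sum>i. c (i+m+1))" for m
  have sTm: "summable (\<lambda>i. c (i+m+1))" for m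
    using summable_ignore_initial_segment[OF sc, of m] by simp
  have T0: "0 \<le> T m" for m unfolding T_def using c0 sTm by (intro suminf_nonneg) auto
  have partial: "(\<Sum>i<M. a (i+n)) \<le> 4 * T (n div 2)" if n1: "1 \<le> n" for n M
  proof -
    define m where "m = n div 2"
    define A where "A = {n..<n+M}"
    define B where "B = {0+(m+1)..<(n+M)+(m+1)}"
    have "(\<Sum>i<M. a (i+n)) = (\<Sum>k\<in>A. a k)"
      using sum.shift_bounds_nat_ivl[of a 0 n M] by (simp add: A_def atLeast0LessThan add.commute)
    also have "\<dots> \<le> (\<Sum>k\<in>A. \<Sum>j\<in>{j\<in>B. k div 2 < j \<and> j \<le> k}. 4 / real k * c j)"
    proof (rule sum_mono)
      fix k assume k: "k \<in> A"
      have "{k div 2 + 1..k} = {j\<in>B. k div 2 < j \<and> j \<le> k}"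
        using k by (auto simp: A_def B_def m_def)
      then show "a k \<le> (\<Sum>j\<in>{j\<in>B. k div 2 < j \<and> j \<le> k}. 4 / real k * c j)"
        using key[of k] k n1 by (simp add: A_def sum_distrib_left)
    qed
    also have "\<dots> = (\<Sum>j\<in>B. \<Sum>k\<in>{k\<in>A. k div 2 < j \<and> j \<le> k}. 4 / real k * c j)"
      by (rule sum.swap_restrict) (auto simp: A_def B_def)
    also have "\<dots> \<le> (\<Sum>j\<in>B. 4 * c j)"
    proof (rule sum_mono)
      fix j assume j: "j \<in> B"
      then have j1: "1 \<le> j" by (simp add: B_def)
      let ?K = "{k\<in>A. k div 2 < j \<and> j \<le> k}"
      have "(\<Sum>k\<in>?K. 4 / real k * c j) \<le> real (card ?K) * (4 / real j * c j)"
      proof (rule sum_bounded_above)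
        fix k assume "k \<in> ?K"
        then have "real j \<le> real k" by simp
        then show "4 / real k * c j \<le> 4 / real j * c j"
          using j1 c0[of j] by (intro mult_right_mono divide_left_mono) auto
      qed
      also have "\<dots> \<le> real j * (4 / real j * c j)"
      proof -
        have "?K \<subseteq> {j..<2*j}" by auto
        then have "card ?K \<le> j" using card_mono[of "{j..<2*j}" ?K] by simp
        then show ?thesis using j1 c0[of j] by (intro mult_right_mono) auto
      qed
      also have "\<dots> = 4 * c j" using j1 by simp
      finally show "(\<Sum>k\<in>?K. 4 / real k * c j) \<le> 4 * c j" .
    qed
    also have "\<dots> = 4 * (\<Sum>i\<in>{0..<n+M}. c (i+(m+1)))"
      unfolding B_def sum.shift_bounds_nat_ivl sum_distrib_left ..
    also have "\<dots> \<le> 4 * T m"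
      unfolding T_def using sum_le_suminf[OF sTm[of m], of "{0..<n+M}"] c0
      by (simp add: add.assoc)
    finally show ?thesis by (simp add: m_def)
  qed
  have sa: "summable (\<lambda>i. a (i+n))" if "1 \<le> n" for n
    using partial[OF that] a0 by (intro summableI_nonneg_bounded) auto
  have Sle: "(\<Sum>i. a (i+n)) \<le> 4 * T (n div 2)" if "1 \<le> n" for n
    using partial[OF that] sa[OF that] by (intro suminf_le_const) auto
  have first: "summable (\<lambda>k. a (k+1))" using sa[of 1] by simp
  define g where "g m = real (m+1) * T m powr p" for m
  have "g = (\<lambda>n. real (n+1) * (\<Sum>i. c (i+n+1)) powr p)"
    by (rule ext) (simp only: g_def T_def)
  then have sg: "summable g" using sT by simp
  have g0: "0 \<le> g m" for m by (simp add: g_def)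
  have sg2: "summable (\<lambda>n. g ((n+1) div 2))"
    using summable_half[OF g0 sg] summable_Suc_iff[of "\<lambda>n. g (n div 2)"] by simp
  have bound: "norm (real (n+1) * (\<Sum>i. a (i+n+1)) powr p) \<le> 2 * 4 powr p * g ((n+1) div 2)" for n
  proof -
    define S where "S = (\<Sum>i. a (i+(n+1)))"
    have S0: "0 \<le> S" unfolding S_def using sa[of "n+1"] a0 by (intro suminf_nonneg) auto
    have "S \<le> 4 * T ((n+1) div 2)" unfolding S_def by (rule Sle) simp
    then have "S powr p \<le> (4 * T ((n+1) div 2)) powr p"
      using S0 p by (intro powr_mono2) auto
    also have "\<dots> = 4 powr p * T ((n+1) div 2) powr p"
      using T0 by (simp add: powr_mult)
    finally have Sp: "S powr p \<le> 4 powr p * T ((n+1) div 2) powr p" .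
    have "n + 1 \<le> 2 * ((n+1) div 2 + 1)" by presburger
    then have "real (n+1) \<le> real (2 * ((n+1) div 2 + 1))" by (rule of_nat_mono)
    then have nn: "real (n+1) \<le> 2 * real ((n+1) div 2 + 1)" by simp
    have "real (n+1) * S powr p \<le> (2 * real ((n+1) div 2 + 1)) * (4 powr p * T ((n+1) div 2) powr p)"
      using nn Sp by (intro mult_mono) auto
    also have "\<dots> = 2 * 4 powr p * g ((n+1) div 2)" by (simp add: g_def)
    finally show ?thesis using S0 by (simp add: S_def add.assoc)
  qed
  have second: "summable (\<lambda>n. real (n+1) * (\<Sum>i. a (i+n+1)) powr p)"
    by (rule summable_comparison_test'[OF summable_mult[OF sg2, of "2 * 4 powr p"] bound])
  show ?thesis using first second by blast
qed

theorem lemma6p10: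
  fixes mu :: "'a \<Rightarrow> 'a \<Rightarrow> real" and v0 :: 'a and p :: real
  assumes "weighted_graph mu"
    and "infinite (UNIV :: 'a set)"
    and "connected_graph mu"
    and "locally_finite_graph mu"
    and "0 < p"
    and "\<not> summable (\<lambda>k. real (k + 1) / smeasure mu (gball mu v0 (k + 1)))
         \<or> \<not> summable (\<lambda>n. real (n + 1) *
              (\<Sum>i. real (i + n + 1) / smeasure mu (gball mu v0 (i + n + 1))) powr p)"
  shows "\<not> summable (\<lambda>k. 1 / bdry mu v0 (k + 1))
         \<or> \<not> summable (\<lambda>n. real (n + 1) *
              (\<Sum>i. 1 / bdry mu v0 (i + n + 1)) powr p)"
proof (rule ccontr)
  assume "\<not> ?thesis"
  then have h: "summable (\<lambda>k. 1 / bdry mu v0 (k + 1))"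
    "summable (\<lambda>n. real (n + 1) * (\<Sum>i. 1 / bdry mu v0 (i + n + 1)) powr p)" by auto
  have "summable (\<lambda>k. (\<lambda>k. real k / smeasure mu (gball mu v0 k)) (k+1)) \<and>
        summable (\<lambda>n. real (n+1) * (\<Sum>i. (\<lambda>k. real k / smeasure mu (gball mu v0 k)) (i+n+1)) powr p)"
  proof (rule analysis[where c = "\<lambda>j. 1 / bdry mu v0 j"])
    show "0 \<le> real k / smeasure mu (gball mu v0 k)" for k
      using smeasure_nonneg[OF assms(1,3,4)] by simp
    show "0 \<le> 1 / bdry mu v0 j" for j
      using b_pos[OF assms(1,3,4,2)] by (simp add: less_imp_le)
    show "real k / smeasure mu (gball mu v0 k) \<le> 4 / real k * (\<Sum>j\<in>{k div 2 + 1..k}. 1 / bdry mu v0 j)"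
      if "1 \<le> k" for k
      using key[OF assms(1,3,4,2) that] .
  qed (use h assms(5) in auto)
  then show False using assms(6) by simp
qed

end
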